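(* Let $n\ge 1$, $s\in\{1,\dots,n\}$, let $C\in\mathbb{R}^{n\times n}$ be symmetric positive definite, and let $z^*=\max\{\log\det(C_{S,S}) : S\subseteq\{1,\dots,n\},\ |S|=s\}$. Then for every $t$ with $0\le t\le\lambda_{\min}(C)$, $$z^*=\max\Big\{\widehat{\Phi}_s\big(M_t(x);t\big) : x\in\{0,1\}^n,\ \textstyle\sum_{i=1}^n x_i=s\Big\}.$$
   Context: $\log$ is natural, $C_{S,S}$ is the principal submatrix of $C$ indexed by $S$, and $\lambda_{\min}(C)$ is the smallest eigenvalue of $C$. For $0\le t\le\lambda_{\min}(C)$ let $A(t)\in\mathbb{R}^{n\times n}$ be a Cholesky factor of $C-tI$ (so $C-tI=A(t)^\top A(t)$), with $i$-th column $a_i(t)$, and for $x\in[0,1]^n$ put $M_t(x)=\sum_i x_i a_i(t)a_i(t)^\top$. For a positive semidefinite $X$ with eigenvalues $\lambda_1(X)\ge\dots\ge\lambda_n(X)$, let $\Phi_s(X;t)=\sum_{i=1}^s\log(\lambda_i(X)+t)$. $\widehat{\Phi}_s(\cdot\,;t)$ is the concave envelope of $\Phi_s(\cdot\,;t)$ on the cone of $n\times n$ positive semidefinite matrices, i.e. the pointwise infimum of all concave functions there that are $\ge\Phi_s(\cdot\,;t)$. *)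

theory Defs
  imports "Jordan_Normal_Form.Spectral_Radius" "Jordan_Normal_Form.DL_Submatrix"
    "HOL-Library.Extended_Real"
begin

definition eigs_desc :: "real mat \<Rightarrow> real list" where
  "eigs_desc X = rev (sorted_list_of_multiset (proots (char_poly X)))"

(* lambda_i(X), 1-based *)
definition eig :: "real mat \<Rightarrow> nat \<Rightarrow> real" where
  "eig X i = eigs_desc X ! (i - 1)"

definition lambda_min :: "real mat \<Rightarrow> real" where
  "lambda_min C = Min (spectrum C)"

definition sym_mat :: "real mat \<Rightarrow> bool" where
  "sym_mat X \<longleftrightarrow> transpose_mat X = X"

definition pos_def :: "nat \<Rightarrow> real mat \<Rightarrow> bool" where
  "pos_def n C \<longleftrightarrow> C \<in> carrier_mat n n \<and> sym_mat C \<and>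
     (\<forall>v \<in> carrier_vec n. v \<noteq> 0\<^sub>v n \<longrightarrow> 0 < v \<bullet> (C *\<^sub>v v))"

definition psd_cone :: "nat \<Rightarrow> real mat set" where
  "psd_cone n = {X \<in> carrier_mat n n. sym_mat X \<and> (\<forall>v \<in> carrier_vec n. 0 \<le> v \<bullet> (X *\<^sub>v v))}"

definition Phi :: "nat \<Rightarrow> real \<Rightarrow> real mat \<Rightarrow> ereal" where
  "Phi s t X = (if (\<forall>i\<in>{1..s}. 0 < eig X i + t)
                then ereal (\<Sum>i=1..s. ln (eig X i + t)) else -\<infinity>)"

(* concavity on the PSD cone (hypograph convexity, for extended-real valued g) *)
definition concave_on_psd :: "nat \<Rightarrow> (real mat \<Rightarrow> ereal) \<Rightarrow> bool" where
  "concave_on_psd n g \<longleftrightarrow>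
     (\<forall>X \<in> psd_cone n. \<forall>Y \<in> psd_cone n. \<forall>\<theta>::real. \<forall>a b::real.
        0 \<le> \<theta> \<longrightarrow> \<theta> \<le> 1 \<longrightarrow> ereal a \<le> g X \<longrightarrow> ereal b \<le> g Y \<longrightarrow>
        ereal (\<theta> * a + (1 - \<theta>) * b) \<le> g (\<theta> \<cdot>\<^sub>m X + (1 - \<theta>) \<cdot>\<^sub>m Y))"

definition Phi_hat :: "nat \<Rightarrow> nat \<Rightarrow> real \<Rightarrow> real mat \<Rightarrow> ereal" where
  "Phi_hat n s t X = Inf {g X | g. concave_on_psd n g \<and> (\<forall>Y \<in> psd_cone n. Phi s t Y \<le> g Y)}"

definition cholesky_factor :: "nat \<Rightarrow> real mat \<Rightarrow> real \<Rightarrow> real mat \<Rightarrow> bool" where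
  "cholesky_factor n C t A \<longleftrightarrow> A \<in> carrier_mat n n \<and> upper_triangular A \<and>
     (\<forall>i<n. 0 \<le> A $$ (i, i)) \<and> transpose_mat A * A = C - t \<cdot>\<^sub>m 1\<^sub>m n"

(* M_t(x) = sum_i x_i a_i a_i^T, a_i the i-th column of A *)
definition M_mat :: "nat \<Rightarrow> real mat \<Rightarrow> real vec \<Rightarrow> real mat" where
  "M_mat n A x = mat n n (\<lambda>(j, k). \<Sum>i<n. x $ i * (A $$ (j, i) * A $$ (k, i)))"

end

theory Submission
  imports Defs
begin


definition qf :: "real mat \<Rightarrow> (nat \<Rightarrow> real) \<Rightarrow> real" where
  "qf X a = (\<Sum>i<dim_row X. \<Sum>j<dim_row X. X $$ (i,j) * a i * a j)"

lemma qf_vec: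
  assumes "X \<in> carrier_mat n n"
  shows "vec n a \<bullet> (X *\<^sub>v vec n a) = qf X a"
  using assms unfolding qf_def scalar_prod_def mult_mat_vec_def
  by (auto simp: row_def sum_distrib_left atLeast0LessThan intro!: sum.cong)

lemma herm:
  fixes X :: "real mat" and v :: "complex vec"
  assumes X: "X \<in> carrier_mat n n" and sym: "sym_mat X" and v: "v \<in> carrier_vec n"
  shows "(\<Sum>i<n. cnj (v$i) * (map_mat complex_of_real X *\<^sub>v v) $ i)
     = complex_of_real (qf X (\<lambda>i. Re (v$i)) + qf X (\<lambda>i. Im (v$i)))"
proof -
  have Xs: "\<And>i j. i < n \<Longrightarrow> j < n \<Longrightarrow> X $$ (j,i) = X $$ (i,j)"
    using sym X unfolding sym_mat_def by (metis carrier_matD index_transpose_mat(1))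
  have e: "(map_mat complex_of_real X *\<^sub>v v) $ i = (\<Sum>j<n. of_real (X $$ (i,j)) * v $ j)" if "i < n" for i
    using X v that by (auto simp: mult_mat_vec_def scalar_prod_def row_def atLeast0LessThan)
  have L: "(\<Sum>i<n. cnj (v$i) * (map_mat complex_of_real X *\<^sub>v v) $ i)
      = (\<Sum>i<n. \<Sum>j<n. of_real (X $$ (i,j)) * (cnj (v$i) * v$j))"
    by (auto simp: e sum_distrib_left intro!: sum.cong simp: algebra_simps)
  have Im0: "(\<Sum>i<n. \<Sum>j<n. X $$ (i,j) * (Re (v$i) * Im (v$j))) = (\<Sum>i<n. \<Sum>j<n. X $$ (i,j) * (Im (v$i) * Re (v$j)))"
    apply (subst sum.swap) using Xs by (auto intro!: sum.cong)
  show ?thesis unfolding L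
  proof (rule complex_eqI)
    show "Re (\<Sum>i<n. \<Sum>j<n. complex_of_real (X $$ (i, j)) * (cnj (v $ i) * v $ j)) =
      Re (complex_of_real (qf X (\<lambda>i. Re (v $ i)) + qf X (\<lambda>i. Im (v $ i))))"
    proof -
      have "Re (\<Sum>i<n. \<Sum>j<n. complex_of_real (X $$ (i, j)) * (cnj (v $ i) * v $ j))
        = (\<Sum>i<n. \<Sum>j<n. X $$ (i, j) * Re (v $ i) * Re (v $ j) + X $$ (i, j) * Im (v $ i) * Im (v $ j))"
        by (simp add: Re_sum algebra_simps)
      also have "\<dots> = qf X (\<lambda>i. Re (v $ i)) + qf X (\<lambda>i. Im (v $ i))"
        using X by (simp add: qf_def sum.distrib)
      finally show ?thesis by simp
    qed
    show "Im (\<Sum>i<n. \<Sum>j<n. complex_of_real (X $$ (i, j)) * (cnj (v $ i) * v $ j)) =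
      Im (complex_of_real (qf X (\<lambda>i. Re (v $ i)) + qf X (\<lambda>i. Im (v $ i))))"
    proof -
      have "Im (\<Sum>i<n. \<Sum>j<n. complex_of_real (X $$ (i, j)) * (cnj (v $ i) * v $ j))
        = (\<Sum>i<n. \<Sum>j<n. X $$ (i, j) * (Re (v $ i) * Im (v $ j)) - X $$ (i, j) * (Im (v $ i) * Re (v $ j)))"
        by (simp add: Im_sum algebra_simps)
      also have "\<dots> = 0" using Im0 by (simp add: sum_subtractf)
      finally show ?thesis by simp
    qed
  qed
qed

lemma map_poly_of_real_inj:
  assumes "map_poly complex_of_real p = map_poly complex_of_real q"
  shows "p = q"
proof (rule poly_eqI)
  fix i
  have "complex_of_real (coeff p i) = complex_of_real (coeff q i)"
    using arg_cong[OF assms, of "\<lambda>p. coeff p i"] by (simp add: coeff_map_poly)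
  thus "coeff p i = coeff q i" by simp
qed

lemma map_poly_of_real_lin_prod:
  "map_poly complex_of_real (\<Prod>r\<leftarrow>rs. [:-r,1:]) = (\<Prod>r\<leftarrow>rs. [:- complex_of_real r,1:])"
proof -
  interpret h: map_poly_comm_ring_hom "complex_of_real" ..
  show ?thesis
  proof (induct rs)
    case (Cons a rs)
    have "map_poly complex_of_real (\<Prod>r\<leftarrow>a#rs. [:-r,1:])
      = map_poly complex_of_real [:-a,1:] * map_poly complex_of_real (\<Prod>r\<leftarrow>rs. [:-r,1:])"
      by (simp only: list.map prod_list.Cons h.hom_mult)
    also have "\<dots> = [:- complex_of_real a,1:] * (\<Prod>r\<leftarrow>rs. [:- complex_of_real r,1:])"
      using Cons by simp
    finally show ?case by simp
  qed simp
qed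

lemma real_split:
  fixes Z :: "real mat"
  assumes Z: "Z \<in> carrier_mat n n"
  and H: "\<And>l v. v \<in> carrier_vec n \<Longrightarrow> v \<noteq> 0\<^sub>v n \<Longrightarrow> map_mat complex_of_real Z *\<^sub>v v = l \<cdot>\<^sub>v v \<Longrightarrow> Im l = 0"
  shows "\<exists>rs. length rs = n \<and> char_poly Z = (\<Prod>r\<leftarrow>rs. [:-r,1:]) \<and>
    (\<forall>r\<in>set rs. \<exists>v. v \<in> carrier_vec n \<and> v \<noteq> 0\<^sub>v n \<and> map_mat complex_of_real Z *\<^sub>v v = complex_of_real r \<cdot>\<^sub>v v)"
proof -
  let ?Zc = "map_mat complex_of_real Z"
  have Zc: "?Zc \<in> carrier_mat n n" using Z by simp
  obtain as where cp: "char_poly ?Zc = (\<Prod>a\<leftarrow>as. [:-a,1:])" and len: "length as = n"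
    using char_poly_factorized[OF Zc] by blast
  have ev: "\<exists>v. v \<in> carrier_vec n \<and> v \<noteq> 0\<^sub>v n \<and> ?Zc *\<^sub>v v = a \<cdot>\<^sub>v v" if "a \<in> set as" for a
  proof -
    have "poly (char_poly ?Zc) a = 0" unfolding cp using that
      by (simp add: poly_prod_list prod_list_zero_iff)
    hence "eigenvalue ?Zc a" using eigenvalue_root_char_poly[OF Zc] by simp
    thus ?thesis unfolding eigenvalue_def eigenvector_def using Zc by auto
  qed
  have real: "a = complex_of_real (Re a)" if "a \<in> set as" for a
  proof -
    from ev[OF that] H have "Im a = 0" by blast
    thus ?thesis by (simp add: complex_eqI)
  qed
  define rs where "rs = map Re as"
  have as_eq: "as = map complex_of_real rs" unfolding rs_def
    by (rule nth_equalityI) (use real in auto)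
  have "map_poly complex_of_real (char_poly Z) = char_poly ?Zc"
    by (simp add: of_real_hom.char_poly_hom[OF Z])
  also have "\<dots> = map_poly complex_of_real (\<Prod>r\<leftarrow>rs. [:-r,1:])"
    unfolding cp as_eq map_poly_of_real_lin_prod by (simp add: o_def)
  finally have "char_poly Z = (\<Prod>r\<leftarrow>rs. [:-r,1:])" by (rule map_poly_of_real_inj)
  moreover have "length rs = n" using len rs_def by simp
  moreover have "\<forall>r\<in>set rs. \<exists>v. v \<in> carrier_vec n \<and> v \<noteq> 0\<^sub>v n \<and> ?Zc *\<^sub>v v = complex_of_real r \<cdot>\<^sub>v v"
    using ev as_eq by auto
  ultimately show ?thesis by blast
qed

lemma sq_sum_pos:
  fixes v :: "complex vec"
  assumes v: "v \<in> carrier_vec n" "v \<noteq> 0\<^sub>v n"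
  shows "(\<Sum>i<n. (Re (v$i))^2) + (\<Sum>i<n. (Im (v$i))^2) > 0"
proof -
  obtain i where i: "i < n" "v $ i \<noteq> 0" using v by (metis eq_vecI index_zero_vec(1) index_zero_vec(2) carrier_vecD)
  hence "(Re (v$i))^2 + (Im (v$i))^2 > 0" by (metis complex_eqI zero_complex.sel add_pos_nonneg add_nonneg_pos zero_less_power2 zero_le_power2)
  also have "(Re (v$i))^2 + (Im (v$i))^2 \<le> (\<Sum>i<n. (Re (v$i))^2 + (Im (v$i))^2)"
    by (rule member_le_sum[of i "{..<n}" "\<lambda>i. (Re (v$i))^2 + (Im (v$i))^2"]) (use i in auto)
  finally show ?thesis by (simp add: sum.distrib)
qed

lemma gen_eig:
  fixes P Q G :: "real mat"
  assumes P: "P \<in> carrier_mat n n" and Q: "Q \<in> carrier_mat n n" and G: "G \<in> carrier_mat n n"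
  and symP: "sym_mat P" and symQ: "sym_mat Q" and PG: "P * G = 1\<^sub>m n"
  and Ppos: "\<And>a. qf P a \<ge> \<tau> * (\<Sum>i<n. (a i)^2)" and tau: "\<tau> > 0"
  shows "\<exists>rs. length rs = n \<and> char_poly (G*Q) = (\<Prod>r\<leftarrow>rs. [:-r,1:]) \<and>
     (\<forall>r\<in>set rs. \<exists>a b. (\<Sum>i<n. (a i)^2) + (\<Sum>i<n. (b i)^2) > 0 \<and> qf P a + qf P b > 0 \<and> qf Q a + qf Q b = r * (qf P a + qf P b))"
proof -
  let ?Zc = "map_mat complex_of_real (G*Q)"
  let ?Pc = "map_mat complex_of_real P"
  let ?Qc = "map_mat complex_of_real Q"
  let ?Gc = "map_mat complex_of_real G"
  have Z: "G * Q \<in> carrier_mat n n" using G Q by simp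
  have key: "complex_of_real (qf Q (\<lambda>i. Re (v$i)) + qf Q (\<lambda>i. Im (v$i)))
      = l * complex_of_real (qf P (\<lambda>i. Re (v$i)) + qf P (\<lambda>i. Im (v$i)))
     \<and> qf P (\<lambda>i. Re (v$i)) + qf P (\<lambda>i. Im (v$i)) > 0"
    if v: "v \<in> carrier_vec n" "v \<noteq> 0\<^sub>v n" and ev: "?Zc *\<^sub>v v = l \<cdot>\<^sub>v v" for v l
  proof
    have Zc: "?Zc = ?Gc * ?Qc" using of_real_hom.mat_hom_mult[OF G Q] .
    have PGc: "?Pc * ?Gc = 1\<^sub>m n" using of_real_hom.mat_hom_mult[OF P G, symmetric] PG by (simp add: of_real_hom.mat_hom_one)
    have Pc: "?Pc \<in> carrier_mat n n" and Gc: "?Gc \<in> carrier_mat n n" and Qc: "?Qc \<in> carrier_mat n n"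
      using P G Q by auto
    have "?Pc * ?Zc = (?Pc * ?Gc) * ?Qc" unfolding Zc
      using assoc_mult_mat[OF Pc Gc Qc] by simp
    also have "\<dots> = ?Qc" unfolding PGc using Qc by simp
    finally have PZ: "?Pc * ?Zc = ?Qc" .
    have Zc': "?Zc \<in> carrier_mat n n" using Z by simp
    have "?Qc *\<^sub>v v = ?Pc *\<^sub>v (?Zc *\<^sub>v v)"
      unfolding PZ[symmetric] using assoc_mult_mat_vec[OF Pc Zc' v(1)] .
    also have "\<dots> = l \<cdot>\<^sub>v (?Pc *\<^sub>v v)" unfolding ev using mult_mat_vec[OF Pc v(1)] .
    finally have QP: "?Qc *\<^sub>v v = l \<cdot>\<^sub>v (?Pc *\<^sub>v v)" .
    have "(\<Sum>i<n. cnj (v$i) * (?Qc *\<^sub>v v) $ i) = (\<Sum>i<n. l * (cnj (v$i) * (?Pc *\<^sub>v v) $ i))"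
      unfolding QP by (rule sum.cong) (use Pc in auto)
    hence "(\<Sum>i<n. cnj (v$i) * (?Qc *\<^sub>v v) $ i) = l * (\<Sum>i<n. cnj (v$i) * (?Pc *\<^sub>v v) $ i)"
      by (simp add: sum_distrib_left)
    thus "complex_of_real (qf Q (\<lambda>i. Re (v$i)) + qf Q (\<lambda>i. Im (v$i)))
      = l * complex_of_real (qf P (\<lambda>i. Re (v$i)) + qf P (\<lambda>i. Im (v$i)))"
      using herm[OF P symP v(1)] herm[OF Q symQ v(1)] by simp
    have "qf P (\<lambda>i. Re (v$i)) + qf P (\<lambda>i. Im (v$i)) \<ge> \<tau> * ((\<Sum>i<n. (Re (v$i))^2) + (\<Sum>i<n. (Im (v$i))^2))"
      using Ppos[of "\<lambda>i. Re (v$i)"] Ppos[of "\<lambda>i. Im (v$i)"] by (simp add: algebra_simps)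
    moreover have "\<tau> * ((\<Sum>i<n. (Re (v$i))^2) + (\<Sum>i<n. (Im (v$i))^2)) > 0"
      using sq_sum_pos[OF v] tau by simp
    ultimately show "qf P (\<lambda>i. Re (v$i)) + qf P (\<lambda>i. Im (v$i)) > 0" by linarith
  qed
  have H: "Im l = 0" if "v \<in> carrier_vec n" "v \<noteq> 0\<^sub>v n" "?Zc *\<^sub>v v = l \<cdot>\<^sub>v v" for l v
  proof -
    from key[OF that] obtain x y :: real where "complex_of_real x = l * complex_of_real y" "y > 0" by blast
    hence "l = complex_of_real (x / y)" by (simp add: field_simps)
    thus ?thesis by simp
  qed
  obtain rs where rs: "length rs = n" "char_poly (G*Q) = (\<Prod>r\<leftarrow>rs. [:-r,1:])"
    and ev: "\<forall>r\<in>set rs. \<exists>v. v \<in> carrier_vec n \<and> v \<noteq> 0\<^sub>v n \<and> ?Zc *\<^sub>v v = complex_of_real r \<cdot>\<^sub>v v"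
  proof -
    have "\<exists>rs. length rs = n \<and> char_poly (G*Q) = (\<Prod>r\<leftarrow>rs. [:-r,1:]) \<and>
      (\<forall>r\<in>set rs. \<exists>v. v \<in> carrier_vec n \<and> v \<noteq> 0\<^sub>v n \<and> ?Zc *\<^sub>v v = complex_of_real r \<cdot>\<^sub>v v)"
      apply (rule real_split[OF Z]) using H by blast
    thus ?thesis using that by blast
  qed
  have "\<exists>a b. (\<Sum>i<n. (a i)^2) + (\<Sum>i<n. (b i)^2) > 0 \<and> qf P a + qf P b > 0 \<and> qf Q a + qf Q b = r * (qf P a + qf P b)" if "r \<in> set rs" for r
  proof -
    from ev that obtain v where v: "v \<in> carrier_vec n" "v \<noteq> 0\<^sub>v n" "?Zc *\<^sub>v v = complex_of_real r \<cdot>\<^sub>v v" by blast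
    from key[OF v] have "complex_of_real (qf Q (\<lambda>i. Re (v$i)) + qf Q (\<lambda>i. Im (v$i)))
      = complex_of_real (r * (qf P (\<lambda>i. Re (v$i)) + qf P (\<lambda>i. Im (v$i))))"
      and "qf P (\<lambda>i. Re (v$i)) + qf P (\<lambda>i. Im (v$i)) > 0" by auto
    thus ?thesis using sq_sum_pos[OF v(1,2)] by (metis of_real_eq_iff)
  qed
  with rs show ?thesis by blast
qed

lemma poly_char:
  fixes A :: "real mat"
  assumes A: "A \<in> carrier_mat n n"
  shows "poly (char_poly A) k = det (k \<cdot>\<^sub>m 1\<^sub>m n - A)"
proof -
  have "- (char_matrix A k) = k \<cdot>\<^sub>m 1\<^sub>m n - A"
    using A unfolding char_matrix_def by (intro eq_matI) auto
  thus ?thesis using char_poly_matrix[OF A] by simp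
qed

lemma prod_list_neg_shift:
  fixes rs :: "real list"
  shows "(\<Prod>r\<leftarrow>rs. (- \<tau> - r)) = (-1) ^ length rs * (\<Prod>r\<leftarrow>rs. (r + \<tau>))"
  by (induct rs) (auto simp: algebra_simps)

lemma det_shift:
  fixes A :: "real mat"
  assumes A: "A \<in> carrier_mat n n" and cp: "char_poly A = (\<Prod>r\<leftarrow>rs. [:-r,1:])" and len: "length rs = n"
  shows "det (A + \<tau> \<cdot>\<^sub>m 1\<^sub>m n) = (\<Prod>r\<leftarrow>rs. (r + \<tau>))"
proof -
  have "poly (char_poly A) (-\<tau>) = (\<Prod>r\<leftarrow>rs. (- \<tau> - r))"
    unfolding cp by (induct rs) (simp_all add: algebra_simps)
  also have "\<dots> = (-1)^n * (\<Prod>r\<leftarrow>rs. (r + \<tau>))" using prod_list_neg_shift len by simp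
  finally have 1: "poly (char_poly A) (-\<tau>) = (-1)^n * (\<Prod>r\<leftarrow>rs. (r + \<tau>))" .
  have "(-\<tau>) \<cdot>\<^sub>m 1\<^sub>m n - A = (-1) \<cdot>\<^sub>m (A + \<tau> \<cdot>\<^sub>m 1\<^sub>m n)"
    using A by (intro eq_matI) auto
  hence "poly (char_poly A) (-\<tau>) = (-1)^n * det (A + \<tau> \<cdot>\<^sub>m 1\<^sub>m n)"
    unfolding poly_char[OF A] using A by (simp add: det_smult)
  with 1 show ?thesis by simp
qed

definition mtrace :: "real mat \<Rightarrow> real" where
  "mtrace A = (\<Sum>i<dim_row A. A $$ (i,i))"

lemma mtrace_comm:
  assumes A: "A \<in> carrier_mat n m" and B: "B \<in> carrier_mat m n"
  shows "mtrace (A * B) = mtrace (B * A)"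
proof -
  have "mtrace (A * B) = (\<Sum>i<n. \<Sum>j<m. A $$ (i,j) * B $$ (j,i))"
    using A B by (auto simp: mtrace_def scalar_prod_def row_def col_def atLeast0LessThan intro!: sum.cong)
  also have "\<dots> = (\<Sum>j<m. \<Sum>i<n. B $$ (j,i) * A $$ (i,j))"
    by (subst sum.swap) (simp add: mult.commute)
  also have "\<dots> = mtrace (B * A)"
    using A B by (auto simp: mtrace_def scalar_prod_def row_def col_def atLeast0LessThan intro!: sum.cong)
  finally show ?thesis .
qed

lemma trace_split:
  fixes Z :: "real mat"
  assumes Z: "Z \<in> carrier_mat n n" and cp: "char_poly Z = (\<Prod>r\<leftarrow>rs. [:-r,1:])"
  shows "mtrace Z = sum_list rs"
proof -
  obtain B P Q where sd: "schur_decomposition Z rs = (B,P,Q)" by (cases "schur_decomposition Z rs") auto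
  from schur_decomposition[OF Z cp sd] have sim: "similar_mat_wit Z B P Q"
    and ut: "upper_triangular B" and dg: "diag_mat B = rs" by auto
  from sim Z have B: "B \<in> carrier_mat n n" and P: "P \<in> carrier_mat n n" and Q: "Q \<in> carrier_mat n n"
    and QP: "Q * P = 1\<^sub>m n" and ZB: "Z = P * B * Q"
    unfolding similar_mat_wit_def Let_def by auto
  have "mtrace Z = mtrace (P * (B * Q))" unfolding ZB using P B Q by (simp add: assoc_mult_mat)
  also have "\<dots> = mtrace ((B * Q) * P)" by (rule mtrace_comm[OF P]) (use B Q in simp)
  also have "\<dots> = mtrace (B * (Q * P))" using P B Q by (simp add: assoc_mult_mat)
  also have "\<dots> = mtrace B" unfolding QP using B by simp
  also have "\<dots> = sum_list (diag_mat B)"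
    using B by (simp add: mtrace_def diag_mat_def sum_list_sum_nth atLeast0LessThan)
  finally show ?thesis using dg by simp
qed

lemma qf_one: "qf (1\<^sub>m n) a = (\<Sum>i<n. (a i)^2)"
proof -
  have "(\<Sum>j<n. (1\<^sub>m n :: real mat) $$ (i,j) * a i * a j) = (a i)^2" if i: "i < n" for i
  proof -
    have "(\<Sum>j<n. (1\<^sub>m n :: real mat) $$ (i,j) * a i * a j) = (\<Sum>j<n. if j = i then a i * a j else 0)"
      by (rule sum.cong) (use i in auto)
    also have "\<dots> = (a i)^2" using i by (simp add: power2_eq_square)
    finally show ?thesis .
  qed
  thus ?thesis unfolding qf_def by simp
qed

lemma sym_eig:
  fixes X :: "real mat"
  assumes X: "X \<in> carrier_mat n n" and sym: "sym_mat X"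
  shows "\<exists>rs. length rs = n \<and> char_poly X = (\<Prod>r\<leftarrow>rs. [:-r,1:]) \<and>
     (\<forall>r\<in>set rs. \<exists>a b. (\<Sum>i<n. (a i)^2) + (\<Sum>i<n. (b i)^2) > 0 \<and>
        qf X a + qf X b = r * ((\<Sum>i<n. (a i)^2) + (\<Sum>i<n. (b i)^2)))"
proof -
  have s1: "sym_mat (1\<^sub>m n :: real mat)" unfolding sym_mat_def by auto
  have "\<exists>rs. length rs = n \<and> char_poly (1\<^sub>m n * X) = (\<Prod>r\<leftarrow>rs. [:-r,1:]) \<and>
     (\<forall>r\<in>set rs. \<exists>a b. (\<Sum>i<n. (a i)^2) + (\<Sum>i<n. (b i)^2) > 0 \<and> qf (1\<^sub>m n) a + qf (1\<^sub>m n) b > 0 \<and> qf X a + qf X b = r * (qf (1\<^sub>m n) a + qf (1\<^sub>m n) b))"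
    by (rule gen_eig[of "1\<^sub>m n" n X "1\<^sub>m n" 1]) (use X sym s1 in \<open>auto simp: qf_one\<close>)
  thus ?thesis using X by (simp add: qf_one)
qed

lemma psd_cone_qf:
  assumes "Y \<in> psd_cone n" shows "qf Y a \<ge> 0"
proof -
  have Y: "Y \<in> carrier_mat n n" using assms unfolding psd_cone_def by auto
  have "0 \<le> vec n a \<bullet> (Y *\<^sub>v vec n a)" using assms unfolding psd_cone_def by auto
  thus ?thesis using qf_vec[OF Y] by simp
qed

lemma sym_eig_nonneg:
  fixes X :: "real mat"
  assumes X: "X \<in> carrier_mat n n" and sym: "sym_mat X" and nn: "\<And>a. qf X a \<ge> 0"
  shows "\<exists>rs. length rs = n \<and> char_poly X = (\<Prod>r\<leftarrow>rs. [:-r,1:]) \<and> (\<forall>r\<in>set rs. r \<ge> 0)"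
proof -
  obtain rs where rs: "length rs = n" "char_poly X = (\<Prod>r\<leftarrow>rs. [:-r,1:])"
    and ev: "\<forall>r\<in>set rs. \<exists>a b. (\<Sum>i<n. (a i)^2) + (\<Sum>i<n. (b i)^2) > 0 \<and>
        qf X a + qf X b = r * ((\<Sum>i<n. (a i)^2) + (\<Sum>i<n. (b i)^2))"
    using sym_eig[OF X sym] by blast
  have "r \<ge> 0" if "r \<in> set rs" for r
  proof -
    from ev that obtain a b where p: "(\<Sum>i<n. (a i)^2) + (\<Sum>i<n. (b i)^2) > 0"
      and e: "qf X a + qf X b = r * ((\<Sum>i<n. (a i)^2) + (\<Sum>i<n. (b i)^2))" by blast
    have "r * ((\<Sum>i<n. (a i)^2) + (\<Sum>i<n. (b i)^2)) \<ge> 0" using e nn[of a] nn[of b] by linarith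
    thus ?thesis using p by (simp add: zero_le_mult_iff)
  qed
  with rs show ?thesis by blast
qed

lemma eigs_desc_split:
  assumes "char_poly X = (\<Prod>r\<leftarrow>rs. [:-r,1:])"
  shows "eigs_desc X = rev (sort rs)"
proof -
  have "proots (\<Prod>r\<leftarrow>rs. [:-r,1:]) = mset rs"
  proof (induct rs)
    case (Cons a rs)
    have P0: "(\<Prod>r\<leftarrow>rs. [:-r,1:]) \<noteq> (0::real poly)" by auto
    have "proots (\<Prod>r\<leftarrow>a#rs. [:-r,1:]) = proots [:-a,1:] + proots (\<Prod>r\<leftarrow>rs. [:-r,1:])"
      by (simp only: list.map prod_list.Cons) (rule proots_mult, simp, rule P0)
    thus ?case using Cons by simp
  qed simp
  thus ?thesis unfolding eigs_desc_def assms by (simp add: sorted_list_of_multiset_mset)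
qed

lemma ln_prod_list:
  fixes f :: "real \<Rightarrow> real"
  assumes "\<And>x. x \<in> set xs \<Longrightarrow> f x > 0"
  shows "ln (\<Prod>x\<leftarrow>xs. f x) = (\<Sum>x\<leftarrow>xs. ln (f x))"
  using assms
proof (induct xs)
  case (Cons a xs)
  have "(\<Prod>x\<leftarrow>xs. f x) > 0" using Cons(2) by (induct xs) (auto intro!: mult_pos_pos)
  moreover have "f a > 0" using Cons(2) by simp
  ultimately have "ln (f a * (\<Prod>x\<leftarrow>xs. f x)) = ln (f a) + ln (\<Prod>x\<leftarrow>xs. f x)"
    by (intro ln_mult_pos) auto
  thus ?case using Cons by simp
qed simp

lemma sum_nth_perm:
  fixes f :: "real \<Rightarrow> real"
  assumes "mset L = mset rs"
  shows "(\<Sum>i<length L. f (L ! i)) = (\<Sum>r\<leftarrow>rs. f r)"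
proof -
  have "(\<Sum>i<length L. f (L ! i)) = (\<Sum>r\<leftarrow>L. f r)"
    by (simp add: sum_list_sum_nth atLeast0LessThan)
  also have "\<dots> = (\<Sum>r\<leftarrow>rs. f r)"
    by (metis assms mset_map sum_mset_sum_list)
  finally show ?thesis .
qed

lemma sum_shift1:
  "(\<Sum>i\<in>{1..s}. g (i - 1)) = (\<Sum>i<(s::nat). (g i :: real))"
proof -
  have "{1..s} = Suc ` {..<s}" by (simp add: image_Suc_lessThan)
  thus ?thesis by (simp add: sum.reindex)
qed

lemma Phi_le:
  assumes Y: "Y \<in> psd_cone n" and sn: "s \<le> n" and tt: "t \<le> \<tau>" and tau: "\<tau> > 0"
  shows "Phi s t Y \<le> ereal (ln (det (Y + \<tau> \<cdot>\<^sub>m 1\<^sub>m n)) - real (n - s) * ln \<tau>)"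
proof -
  have Yc: "Y \<in> carrier_mat n n" and sym: "sym_mat Y" using Y unfolding psd_cone_def by auto
  obtain rs where len: "length rs = n" and cp: "char_poly Y = (\<Prod>r\<leftarrow>rs. [:-r,1:])"
    and nn: "\<forall>r\<in>set rs. r \<ge> 0"
    using sym_eig_nonneg[OF Yc sym psd_cone_qf[OF Y]] by blast
  define L where "L = rev (sort rs)"
  have eL: "eigs_desc Y = L" unfolding L_def by (rule eigs_desc_split[OF cp])
  have mL: "mset L = mset rs" and lL: "length L = n" and sL: "set L = set rs"
    unfolding L_def using len by auto
  have eig: "\<And>i. eig Y i = L ! (i - 1)" by (simp add: eig_def eL)
  have Lnn: "L ! i \<ge> 0" if "i < n" for i using nn sL lL that by (metis nth_mem)
  show ?thesis
  proof (cases "\<forall>i\<in>{1..s}. 0 < eig Y i + t")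
    case False
    hence "Phi s t Y = -\<infinity>" unfolding Phi_def by meson
    thus ?thesis by simp
  next
    case True
    have "(\<Sum>i=1..s. ln (eig Y i + t)) \<le> (\<Sum>i=1..s. ln (L!(i-1) + \<tau>))"
    proof (rule sum_mono)
      fix i assume i: "i \<in> {1..s}"
      have "0 < L!(i-1) + t" using True i eig by auto
      thus "ln (eig Y i + t) \<le> ln (L!(i-1) + \<tau>)" using tt eig by simp
    qed
    also have "\<dots> = (\<Sum>i<s. ln (L!i + \<tau>))" by (rule sum_shift1)
    also have "\<dots> = (\<Sum>i<n. ln (L!i + \<tau>)) - (\<Sum>i\<in>{s..<n}. ln (L!i + \<tau>))"
    proof -
      have "(\<Sum>i<n. ln (L!i + \<tau>)) = (\<Sum>i<s. ln (L!i + \<tau>)) + (\<Sum>i\<in>{s..<n}. ln (L!i + \<tau>))"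
        using sn by (simp add: atLeast0LessThan[symmetric] sum.atLeastLessThan_concat)
      thus ?thesis by simp
    qed
    also have "\<dots> \<le> (\<Sum>i<n. ln (L!i + \<tau>)) - real (n - s) * ln \<tau>"
    proof -
      have "(\<Sum>i\<in>{s..<n}. ln \<tau>) \<le> (\<Sum>i\<in>{s..<n}. ln (L!i + \<tau>))"
      proof (rule sum_mono)
        fix i assume "i \<in> {s..<n}"
        hence "L!i \<ge> 0" using Lnn by auto
        thus "ln \<tau> \<le> ln (L!i + \<tau>)" using tau by simp
      qed
      thus ?thesis by simp
    qed
    also have "(\<Sum>i<n. ln (L!i + \<tau>)) = (\<Sum>r\<leftarrow>rs. ln (r + \<tau>))"
      using sum_nth_perm[OF mL, of "\<lambda>r. ln (r + \<tau>)"] lL by simp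
    also have "\<dots> = ln (\<Prod>r\<leftarrow>rs. (r + \<tau>))"
      by (rule ln_prod_list[symmetric]) (use nn tau in auto)
    also have "\<dots> = ln (det (Y + \<tau> \<cdot>\<^sub>m 1\<^sub>m n))" using det_shift[OF Yc cp len] by simp
    finally show ?thesis using True by (simp add: Phi_def)
  qed
qed

lemma qf_shift:
  assumes M: "M \<in> carrier_mat n n"
  shows "qf (M + \<tau> \<cdot>\<^sub>m 1\<^sub>m n) a = qf M a + \<tau> * (\<Sum>i<n. (a i)^2)"
proof -
  have "qf (M + \<tau> \<cdot>\<^sub>m 1\<^sub>m n) a = (\<Sum>i<n. \<Sum>j<n. M $$ (i,j) * a i * a j + \<tau> * ((1\<^sub>m n :: real mat) $$ (i,j) * a i * a j))"
    unfolding qf_def using M by (auto intro!: sum.cong simp: algebra_simps)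
  also have "\<dots> = qf M a + \<tau> * qf (1\<^sub>m n) a"
    unfolding qf_def using M by (simp add: sum.distrib sum_distrib_left)
  finally show ?thesis by (simp add: qf_one)
qed

lemma sym_shift:
  assumes M: "M \<in> carrier_mat n n" and "sym_mat M"
  shows "sym_mat (M + \<tau> \<cdot>\<^sub>m 1\<^sub>m n)"
  using assms unfolding sym_mat_def by (intro eq_matI) (auto, metis carrier_matD index_transpose_mat(1))

lemma psd_det_pos:
  assumes Y: "Y \<in> psd_cone n" and tau: "\<tau> > 0"
  shows "det (Y + \<tau> \<cdot>\<^sub>m 1\<^sub>m n) > 0"
proof -
  have Yc: "Y \<in> carrier_mat n n" and sym: "sym_mat Y" using Y unfolding psd_cone_def by auto
  obtain rs where len: "length rs = n" and cp: "char_poly Y = (\<Prod>r\<leftarrow>rs. [:-r,1:])"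
    and nn: "\<forall>r\<in>set rs. r \<ge> 0"
    using sym_eig_nonneg[OF Yc sym psd_cone_qf[OF Y]] by blast
  have "(\<Prod>r\<leftarrow>rs. (r + \<tau>)) > 0" using nn tau by (induct rs) (auto intro!: mult_pos_pos)
  thus ?thesis using det_shift[OF Yc cp len] by simp
qed

lemma sum_ln_le:
  fixes rs :: "real list"
  assumes "\<forall>r\<in>set rs. r > 0"
  shows "(\<Sum>r\<leftarrow>rs. ln r) \<le> sum_list rs - length rs"
  using assms
proof (induct rs)
  case (Cons a rs)
  have "ln a \<le> a - 1" using Cons(2) by (intro ln_le_minus_one) auto
  thus ?case using Cons by auto
qed simp

lemma logdet_super:
  assumes M: "M \<in> psd_cone n" and Y: "Y \<in> psd_cone n" and tau: "\<tau> > 0"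
  and G: "G \<in> carrier_mat n n" and PG: "(M + \<tau> \<cdot>\<^sub>m 1\<^sub>m n) * G = 1\<^sub>m n"
  shows "ln (det (Y + \<tau> \<cdot>\<^sub>m 1\<^sub>m n)) \<le> ln (det (M + \<tau> \<cdot>\<^sub>m 1\<^sub>m n)) + mtrace (G * (Y + \<tau> \<cdot>\<^sub>m 1\<^sub>m n)) - n"
proof -
  have Mc: "M \<in> carrier_mat n n" and symM: "sym_mat M" using M unfolding psd_cone_def by auto
  have Yc: "Y \<in> carrier_mat n n" and symY: "sym_mat Y" using Y unfolding psd_cone_def by auto
  define P where "P = M + \<tau> \<cdot>\<^sub>m 1\<^sub>m n"
  define Q where "Q = Y + \<tau> \<cdot>\<^sub>m 1\<^sub>m n"
  have Pc: "P \<in> carrier_mat n n" and Qc: "Q \<in> carrier_mat n n" unfolding P_def Q_def using Mc Yc by auto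
  have symP: "sym_mat P" unfolding P_def by (rule sym_shift[OF Mc symM])
  have symQ: "sym_mat Q" unfolding Q_def by (rule sym_shift[OF Yc symY])
  have qP: "qf P a \<ge> \<tau> * (\<Sum>i<n. (a i)^2)" for a
    unfolding P_def qf_shift[OF Mc] using psd_cone_qf[OF M] by simp
  have qQ: "qf Q a \<ge> \<tau> * (\<Sum>i<n. (a i)^2)" for a
    unfolding Q_def qf_shift[OF Yc] using psd_cone_qf[OF Y] by simp
  obtain rs where len: "length rs = n" and cp: "char_poly (G*Q) = (\<Prod>r\<leftarrow>rs. [:-r,1:])"
    and ev: "\<forall>r\<in>set rs. \<exists>a b. (\<Sum>i<n. (a i)^2) + (\<Sum>i<n. (b i)^2) > 0 \<and> qf P a + qf P b > 0 \<and> qf Q a + qf Q b = r * (qf P a + qf P b)"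
    using gen_eig[OF Pc Qc G symP symQ PG[folded P_def] qP tau] by blast
  have rpos: "\<forall>r\<in>set rs. r > 0"
  proof
    fix r assume "r \<in> set rs"
    then obtain a b where s: "(\<Sum>i<n. (a i)^2) + (\<Sum>i<n. (b i)^2) > 0" and p: "qf P a + qf P b > 0"
      and e: "qf Q a + qf Q b = r * (qf P a + qf P b)" using ev by blast
    have "qf Q a + qf Q b > 0" using qQ[of a] qQ[of b] s tau
      by (smt (verit, best) distrib_left mult_pos_pos)
    thus "r > 0" using e p by (simp add: zero_less_mult_iff)
  qed
  have GQ: "G * Q \<in> carrier_mat n n" using G Qc by simp
  have detZ: "det (G * Q) = (\<Prod>r\<leftarrow>rs. r)"
  proof -
    have z: "\<And>Z::real mat. Z \<in> carrier_mat n n \<Longrightarrow> Z + 0 \<cdot>\<^sub>m 1\<^sub>m n = Z" by (intro eq_matI) auto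
    have "G * Q + 0 \<cdot>\<^sub>m 1\<^sub>m n = G * Q" using z[OF GQ] .
    thus ?thesis using det_shift[OF GQ cp len, of 0] by simp
  qed
  have trZ: "mtrace (G * Q) = sum_list rs" by (rule trace_split[OF GQ cp])
  have dP: "det P > 0" unfolding P_def by (rule psd_det_pos[OF M tau])
  have dQ: "det Q > 0" unfolding Q_def by (rule psd_det_pos[OF Y tau])
  have "det P * det G = 1" using det_mult[OF Pc G] PG[folded P_def] by simp
  hence dG: "det G = 1 / det P" using dP by (simp add: field_simps)
  have "ln (det Q) - ln (det P) = ln (det Q / det P)" using dP dQ by (simp add: ln_div)
  also have "det Q / det P = det (G * Q)" using det_mult[OF G Qc] dG by simp
  also have "ln (det (G * Q)) = (\<Sum>r\<leftarrow>rs. ln r)" unfolding detZ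
    using ln_prod_list[of rs "\<lambda>r. r"] rpos by simp
  also have "\<dots> \<le> sum_list rs - length rs" by (rule sum_ln_le[OF rpos])
  finally show ?thesis unfolding trZ[symmetric] len P_def Q_def by simp
qed

lemma sylvester:
  fixes B D :: "real mat"
  assumes B: "B \<in> carrier_mat n s" and D: "D \<in> carrier_mat s n" and tau: "\<tau> \<noteq> 0" and sn: "s \<le> n"
  shows "det (\<tau> \<cdot>\<^sub>m 1\<^sub>m n + B * D) = \<tau>^(n-s) * det (\<tau> \<cdot>\<^sub>m 1\<^sub>m s + D * B)"
proof -
  have BD: "B * D \<in> carrier_mat n n" and DB: "D * B \<in> carrier_mat s s" using B D by auto
  define X where "X = four_block_mat (\<tau> \<cdot>\<^sub>m 1\<^sub>m n) B ((-1) \<cdot>\<^sub>m D) (1\<^sub>m s)"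
  define F1 where "F1 = four_block_mat (1\<^sub>m n) B (0\<^sub>m s n) (1\<^sub>m s)"
  define F2 where "F2 = four_block_mat (\<tau> \<cdot>\<^sub>m 1\<^sub>m n + B * D) (0\<^sub>m n s) ((-1) \<cdot>\<^sub>m D) (1\<^sub>m s)"
  define F3 where "F3 = four_block_mat (\<tau> \<cdot>\<^sub>m 1\<^sub>m n) (0\<^sub>m n s) ((-1) \<cdot>\<^sub>m D) (1\<^sub>m s + (1/\<tau>) \<cdot>\<^sub>m (D * B))"
  define F4 where "F4 = four_block_mat (1\<^sub>m n) ((1/\<tau>) \<cdot>\<^sub>m B) (0\<^sub>m s n) (1\<^sub>m s)"
  have F1c: "F1 \<in> carrier_mat (n+s) (n+s)" unfolding F1_def using B by auto
  have F2c: "F2 \<in> carrier_mat (n+s) (n+s)" unfolding F2_def using B D by auto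
  have F3c: "F3 \<in> carrier_mat (n+s) (n+s)" unfolding F3_def using B D by auto
  have F4c: "F4 \<in> carrier_mat (n+s) (n+s)" unfolding F4_def using B D by auto
  have e1: "F1 * F2 = X"
  proof -
    have "F1 * F2 = four_block_mat (1\<^sub>m n * (\<tau> \<cdot>\<^sub>m 1\<^sub>m n + B * D) + B * ((-1) \<cdot>\<^sub>m D))
       (1\<^sub>m n * 0\<^sub>m n s + B * 1\<^sub>m s) (0\<^sub>m s n * (\<tau> \<cdot>\<^sub>m 1\<^sub>m n + B * D) + 1\<^sub>m s * ((-1) \<cdot>\<^sub>m D))
       (0\<^sub>m s n * 0\<^sub>m n s + 1\<^sub>m s * 1\<^sub>m s)"
      unfolding F1_def F2_def by (rule mult_four_block_mat) (use B D in auto)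
    also have "\<dots> = X" unfolding X_def
    proof -
      have a: "1\<^sub>m n * (\<tau> \<cdot>\<^sub>m 1\<^sub>m n + B * D) + B * ((-1) \<cdot>\<^sub>m D) = \<tau> \<cdot>\<^sub>m 1\<^sub>m n"
        using B D BD by (simp add: mult_smult_distrib) (intro eq_matI, auto)
      have b: "1\<^sub>m n * 0\<^sub>m n s + B * 1\<^sub>m s = B" using B by simp
      have c: "0\<^sub>m s n * (\<tau> \<cdot>\<^sub>m 1\<^sub>m n + B * D) + 1\<^sub>m s * ((-1) \<cdot>\<^sub>m D) = (-1) \<cdot>\<^sub>m D"
        using B D BD by simp
      have d: "0\<^sub>m s n * 0\<^sub>m n s + 1\<^sub>m s * 1\<^sub>m s = (1\<^sub>m s :: real mat)" by simp
      show "four_block_mat (1\<^sub>m n * (\<tau> \<cdot>\<^sub>m 1\<^sub>m n + B * D) + B * ((-1) \<cdot>\<^sub>m D))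
       (1\<^sub>m n * 0\<^sub>m n s + B * 1\<^sub>m s) (0\<^sub>m s n * (\<tau> \<cdot>\<^sub>m 1\<^sub>m n + B * D) + 1\<^sub>m s * ((-1) \<cdot>\<^sub>m D))
       (0\<^sub>m s n * 0\<^sub>m n s + 1\<^sub>m s * 1\<^sub>m s) = four_block_mat (\<tau> \<cdot>\<^sub>m 1\<^sub>m n) B ((-1) \<cdot>\<^sub>m D) (1\<^sub>m s)"
        unfolding a b c d ..
    qed
    finally show ?thesis .
  qed
  have e2: "F3 * F4 = X"
  proof -
    have "F3 * F4 = four_block_mat (\<tau> \<cdot>\<^sub>m 1\<^sub>m n * 1\<^sub>m n + 0\<^sub>m n s * 0\<^sub>m s n)
       (\<tau> \<cdot>\<^sub>m 1\<^sub>m n * ((1/\<tau>) \<cdot>\<^sub>m B) + 0\<^sub>m n s * 1\<^sub>m s)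
       ((-1) \<cdot>\<^sub>m D * 1\<^sub>m n + (1\<^sub>m s + (1/\<tau>) \<cdot>\<^sub>m (D * B)) * 0\<^sub>m s n)
       ((-1) \<cdot>\<^sub>m D * ((1/\<tau>) \<cdot>\<^sub>m B) + (1\<^sub>m s + (1/\<tau>) \<cdot>\<^sub>m (D * B)) * 1\<^sub>m s)"
      unfolding F3_def F4_def by (rule mult_four_block_mat) (use B D in auto)
    also have "\<dots> = X" unfolding X_def
    proof -
      have a: "\<tau> \<cdot>\<^sub>m 1\<^sub>m n * 1\<^sub>m n + 0\<^sub>m n s * 0\<^sub>m s n = (\<tau> \<cdot>\<^sub>m 1\<^sub>m n :: real mat)" by simp
      have b: "\<tau> \<cdot>\<^sub>m 1\<^sub>m n * ((1/\<tau>) \<cdot>\<^sub>m B) + 0\<^sub>m n s * 1\<^sub>m s = B"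
        using B tau by (simp add: mult_smult_distrib mult_smult_assoc_mat) (intro eq_matI, auto)
      have c: "(-1) \<cdot>\<^sub>m D * 1\<^sub>m n + (1\<^sub>m s + (1/\<tau>) \<cdot>\<^sub>m (D * B)) * 0\<^sub>m s n = (-1) \<cdot>\<^sub>m D"
        using B D DB by simp
      have d: "(-1) \<cdot>\<^sub>m D * ((1/\<tau>) \<cdot>\<^sub>m B) + (1\<^sub>m s + (1/\<tau>) \<cdot>\<^sub>m (D * B)) * 1\<^sub>m s = 1\<^sub>m s"
        using B D DB by (simp add: mult_smult_distrib mult_smult_assoc_mat) (intro eq_matI, auto)
      show "four_block_mat (\<tau> \<cdot>\<^sub>m 1\<^sub>m n * 1\<^sub>m n + 0\<^sub>m n s * 0\<^sub>m s n)
       (\<tau> \<cdot>\<^sub>m 1\<^sub>m n * ((1/\<tau>) \<cdot>\<^sub>m B) + 0\<^sub>m n s * 1\<^sub>m s)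
       ((-1) \<cdot>\<^sub>m D * 1\<^sub>m n + (1\<^sub>m s + (1/\<tau>) \<cdot>\<^sub>m (D * B)) * 0\<^sub>m s n)
       ((-1) \<cdot>\<^sub>m D * ((1/\<tau>) \<cdot>\<^sub>m B) + (1\<^sub>m s + (1/\<tau>) \<cdot>\<^sub>m (D * B)) * 1\<^sub>m s) =
       four_block_mat (\<tau> \<cdot>\<^sub>m 1\<^sub>m n) B ((-1) \<cdot>\<^sub>m D) (1\<^sub>m s)"
        unfolding a b c d ..
    qed
    finally show ?thesis .
  qed
  have d1: "det F1 = 1" unfolding F1_def
    by (subst det_four_block_mat_lower_left_zero[of _ n _ s]) (use B in auto)
  have d2: "det F2 = det (\<tau> \<cdot>\<^sub>m 1\<^sub>m n + B * D)" unfolding F2_def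
    by (subst det_four_block_mat_upper_right_zero[of _ n _ s]) (use B D in auto)
  have d3: "det F3 = \<tau>^n * det (1\<^sub>m s + (1/\<tau>) \<cdot>\<^sub>m (D * B))" unfolding F3_def
    by (subst det_four_block_mat_upper_right_zero[of _ n _ s]) (use B D in \<open>auto simp: det_smult\<close>)
  have d4: "det F4 = 1" unfolding F4_def
    by (subst det_four_block_mat_lower_left_zero[of _ n _ s]) (use B in auto)
  have "det (\<tau> \<cdot>\<^sub>m 1\<^sub>m n + B * D) = det X" using e1 d1 d2 det_mult[OF F1c F2c] by simp
  also have "\<dots> = \<tau>^n * det (1\<^sub>m s + (1/\<tau>) \<cdot>\<^sub>m (D * B))" using e2 d3 d4 det_mult[OF F3c F4c] by simp
  also have "\<tau> \<cdot>\<^sub>m 1\<^sub>m s + D * B = \<tau> \<cdot>\<^sub>m (1\<^sub>m s + (1/\<tau>) \<cdot>\<^sub>m (D * B))"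
    using DB B D tau by (intro eq_matI) (auto simp: field_simps)
  hence "det (\<tau> \<cdot>\<^sub>m 1\<^sub>m s + D * B) = \<tau>^s * det (1\<^sub>m s + (1/\<tau>) \<cdot>\<^sub>m (D * B))"
    using DB B by (simp add: det_smult)
  moreover have "\<tau>^n = \<tau>^(n-s) * \<tau>^s" using sn by (simp add: power_add[symmetric])
  ultimately show ?thesis by simp
qed

lemma psd_gram:
  fixes B :: "real mat"
  assumes B: "B \<in> carrier_mat n m"
  shows "B * transpose_mat B \<in> psd_cone n"
proof -
  have Bt: "transpose_mat B \<in> carrier_mat m n" using B by simp
  have c: "B * transpose_mat B \<in> carrier_mat n n" using B by simp
  have sym: "sym_mat (B * transpose_mat B)" unfolding sym_mat_def
    using transpose_mult[OF B Bt] by simp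
  have "0 \<le> v \<bullet> ((B * transpose_mat B) *\<^sub>v v)" if v: "v \<in> carrier_vec n" for v
  proof -
    have w: "transpose_mat B *\<^sub>v v \<in> carrier_vec m" using Bt v by simp
    have "v \<bullet> ((B * transpose_mat B) *\<^sub>v v) = v \<bullet> (B *\<^sub>v (transpose_mat B *\<^sub>v v))"
      using assoc_mult_mat_vec[OF B Bt v] by simp
    also have "\<dots> = (transpose_mat B *\<^sub>v v) \<bullet> (transpose_mat B *\<^sub>v v)"
      using transpose_vec_mult_scalar[OF B w v] by simp
    also have "\<dots> \<ge> 0" unfolding scalar_prod_def by (auto intro!: sum_nonneg)
    finally show ?thesis .
  qed
  thus ?thesis unfolding psd_cone_def using c sym by auto
qed

lemma mtrace_affine:
  fixes G X Y :: "real mat"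
  assumes G: "G \<in> carrier_mat n n" and X: "X \<in> carrier_mat n n" and Y: "Y \<in> carrier_mat n n"
  shows "mtrace (G * ((\<theta> \<cdot>\<^sub>m X + (1 - \<theta>) \<cdot>\<^sub>m Y) + \<tau> \<cdot>\<^sub>m 1\<^sub>m n))
     = \<theta> * mtrace (G * (X + \<tau> \<cdot>\<^sub>m 1\<^sub>m n)) + (1 - \<theta>) * mtrace (G * (Y + \<tau> \<cdot>\<^sub>m 1\<^sub>m n))"
proof -
  have X1: "X + \<tau> \<cdot>\<^sub>m 1\<^sub>m n \<in> carrier_mat n n" and Y1: "Y + \<tau> \<cdot>\<^sub>m 1\<^sub>m n \<in> carrier_mat n n"
    using X Y by auto
  have "(\<theta> \<cdot>\<^sub>m X + (1 - \<theta>) \<cdot>\<^sub>m Y) + \<tau> \<cdot>\<^sub>m 1\<^sub>m n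
      = \<theta> \<cdot>\<^sub>m (X + \<tau> \<cdot>\<^sub>m 1\<^sub>m n) + (1 - \<theta>) \<cdot>\<^sub>m (Y + \<tau> \<cdot>\<^sub>m 1\<^sub>m n)" (is "_ = ?R")
    using X Y by (intro eq_matI) (auto simp: algebra_simps)
  note eqR = this
  have "G * ((\<theta> \<cdot>\<^sub>m X + (1 - \<theta>) \<cdot>\<^sub>m Y) + \<tau> \<cdot>\<^sub>m 1\<^sub>m n)
      = \<theta> \<cdot>\<^sub>m (G * (X + \<tau> \<cdot>\<^sub>m 1\<^sub>m n)) + (1 - \<theta>) \<cdot>\<^sub>m (G * (Y + \<tau> \<cdot>\<^sub>m 1\<^sub>m n))"
  proof -
    have "G * (\<theta> \<cdot>\<^sub>m (X + \<tau> \<cdot>\<^sub>m 1\<^sub>m n) + (1 - \<theta>) \<cdot>\<^sub>m (Y + \<tau> \<cdot>\<^sub>m 1\<^sub>m n))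
       = G * (\<theta> \<cdot>\<^sub>m (X + \<tau> \<cdot>\<^sub>m 1\<^sub>m n)) + G * ((1 - \<theta>) \<cdot>\<^sub>m (Y + \<tau> \<cdot>\<^sub>m 1\<^sub>m n))"
      by (rule mult_add_distrib_mat[OF G]) (use X1 Y1 in auto)
    also have "\<dots> = \<theta> \<cdot>\<^sub>m (G * (X + \<tau> \<cdot>\<^sub>m 1\<^sub>m n)) + (1 - \<theta>) \<cdot>\<^sub>m (G * (Y + \<tau> \<cdot>\<^sub>m 1\<^sub>m n))"
      using mult_smult_distrib[OF G X1] mult_smult_distrib[OF G Y1] by simp
    finally have "G * ?R = \<theta> \<cdot>\<^sub>m (G * (X + \<tau> \<cdot>\<^sub>m 1\<^sub>m n)) + (1 - \<theta>) \<cdot>\<^sub>m (G * (Y + \<tau> \<cdot>\<^sub>m 1\<^sub>m n))" .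
    with eqR show ?thesis by simp
  qed
  moreover have "G * (X + \<tau> \<cdot>\<^sub>m 1\<^sub>m n) \<in> carrier_mat n n" "G * (Y + \<tau> \<cdot>\<^sub>m 1\<^sub>m n) \<in> carrier_mat n n"
    using G X1 Y1 by auto
  ultimately show ?thesis
    unfolding mtrace_def using G by (simp add: sum.distrib sum_distrib_left)
qed

lemma Phi_hat_ub:
  fixes B :: "real mat"
  assumes B: "B \<in> carrier_mat n s" and sn: "s \<le> n" and tt: "t \<le> \<tau>" and tau: "\<tau> > 0"
  shows "Phi_hat n s t (B * transpose_mat B) \<le> ereal (ln (det (\<tau> \<cdot>\<^sub>m 1\<^sub>m s + transpose_mat B * B)))"
proof -
  define M where "M = B * transpose_mat B"
  have Bt: "transpose_mat B \<in> carrier_mat s n" using B by simp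
  have Mpsd: "M \<in> psd_cone n" unfolding M_def by (rule psd_gram[OF B])
  have Mc: "M \<in> carrier_mat n n" unfolding M_def using B by simp
  define P where "P = M + \<tau> \<cdot>\<^sub>m 1\<^sub>m n"
  have Pc: "P \<in> carrier_mat n n" unfolding P_def using Mc by simp
  have dP: "det P > 0" unfolding P_def by (rule psd_det_pos[OF Mpsd tau])
  define G where "G = (1 / det P) \<cdot>\<^sub>m adj_mat P"
  have Gc: "G \<in> carrier_mat n n" unfolding G_def using adj_mat(1)[OF Pc] by simp
  have PG: "P * G = 1\<^sub>m n"
  proof -
    have "P * G = (1 / det P) \<cdot>\<^sub>m (P * adj_mat P)" unfolding G_def
      using mult_smult_distrib[OF Pc adj_mat(1)[OF Pc]] .
    also have "\<dots> = 1\<^sub>m n" unfolding adj_mat(2)[OF Pc] using dP by (intro eq_matI) auto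
    finally show ?thesis .
  qed
  define c where "c = ln (det P) - real (n - s) * ln \<tau> - real n"
  define g where "g = (\<lambda>Y. ereal (c + mtrace (G * (Y + \<tau> \<cdot>\<^sub>m 1\<^sub>m n))))"
  have conc: "concave_on_psd n g" unfolding concave_on_psd_def
  proof (intro ballI allI impI)
    fix X Y :: "real mat" and \<theta> a b :: real
    assume X: "X \<in> psd_cone n" and Y: "Y \<in> psd_cone n" and th: "0 \<le> \<theta>" "\<theta> \<le> 1"
      and a: "ereal a \<le> g X" and b: "ereal b \<le> g Y"
    have Xc: "X \<in> carrier_mat n n" and Yc: "Y \<in> carrier_mat n n" using X Y unfolding psd_cone_def by auto
    have a': "a \<le> c + mtrace (G * (X + \<tau> \<cdot>\<^sub>m 1\<^sub>m n))" using a unfolding g_def by simp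
    have b': "b \<le> c + mtrace (G * (Y + \<tau> \<cdot>\<^sub>m 1\<^sub>m n))" using b unfolding g_def by simp
    have "\<theta> * a + (1 - \<theta>) * b \<le> \<theta> * (c + mtrace (G * (X + \<tau> \<cdot>\<^sub>m 1\<^sub>m n))) + (1 - \<theta>) * (c + mtrace (G * (Y + \<tau> \<cdot>\<^sub>m 1\<^sub>m n)))"
      using a' b' th by (intro add_mono mult_left_mono) auto
    also have "\<dots> = c + mtrace (G * ((\<theta> \<cdot>\<^sub>m X + (1 - \<theta>) \<cdot>\<^sub>m Y) + \<tau> \<cdot>\<^sub>m 1\<^sub>m n))"
      unfolding mtrace_affine[OF Gc Xc Yc] by (simp add: algebra_simps)
    finally show "ereal (\<theta> * a + (1 - \<theta>) * b) \<le> g (\<theta> \<cdot>\<^sub>m X + (1 - \<theta>) \<cdot>\<^sub>m Y)"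
      unfolding g_def by simp
  qed
  have maj: "\<forall>Y \<in> psd_cone n. Phi s t Y \<le> g Y"
  proof
    fix Y assume Y: "Y \<in> psd_cone n"
    have "Phi s t Y \<le> ereal (ln (det (Y + \<tau> \<cdot>\<^sub>m 1\<^sub>m n)) - real (n - s) * ln \<tau>)"
      by (rule Phi_le[OF Y sn tt tau])
    also have "\<dots> \<le> g Y" unfolding g_def c_def
      using logdet_super[OF Mpsd Y tau Gc PG[unfolded P_def]] unfolding P_def by simp
    finally show "Phi s t Y \<le> g Y" .
  qed
  have "Phi_hat n s t M \<le> g M" unfolding Phi_hat_def
    by (rule Inf_lower) (use conc maj in blast)
  also have "g M = ereal (ln (det (\<tau> \<cdot>\<^sub>m 1\<^sub>m s + transpose_mat B * B)))"
  proof -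
    have "mtrace (G * P) = mtrace (P * G)" by (rule mtrace_comm[OF Gc Pc])
    also have "\<dots> = real n" unfolding PG mtrace_def by simp
    finally have tr: "mtrace (G * P) = real n" .
    have BtB: "transpose_mat B * B \<in> psd_cone s"
      using psd_gram[OF Bt] by simp
    have "det P = det (\<tau> \<cdot>\<^sub>m 1\<^sub>m n + B * transpose_mat B)"
      unfolding P_def M_def using B by (simp add: comm_add_mat[of _ n n])
    also have "\<dots> = \<tau>^(n-s) * det (\<tau> \<cdot>\<^sub>m 1\<^sub>m s + transpose_mat B * B)"
      by (rule sylvester[OF B Bt _ sn]) (use tau in simp)
    finally have dPe: "det P = \<tau>^(n-s) * det (\<tau> \<cdot>\<^sub>m 1\<^sub>m s + transpose_mat B * B)" .
    have dpos: "det (\<tau> \<cdot>\<^sub>m 1\<^sub>m s + transpose_mat B * B) > 0"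
      using psd_det_pos[OF BtB tau] Bt by (simp add: comm_add_mat[of _ s s])
    have "ln (det P) = real (n - s) * ln \<tau> + ln (det (\<tau> \<cdot>\<^sub>m 1\<^sub>m s + transpose_mat B * B))"
      unfolding dPe using tau dpos by (simp add: ln_mult_pos ln_realpow)
    thus ?thesis unfolding g_def c_def using tr P_def by simp
  qed
  finally show ?thesis unfolding M_def .
qed

lemma poly_eq_nonzero_points:
  fixes p q :: "real poly"
  assumes "\<And>x. x \<noteq> 0 \<Longrightarrow> poly p x = poly q x"
  shows "p = q"
proof (rule ccontr)
  assume "p \<noteq> q"
  hence "p - q \<noteq> 0" by simp
  hence fin: "finite {x. poly (p - q) x = 0}" by (rule poly_roots_finite)
  have "{x::real. x \<noteq> 0} \<subseteq> {x. poly (p - q) x = 0}" using assms by auto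
  moreover have "infinite {x::real. x \<noteq> 0}"
  proof
    assume "finite {x::real. x \<noteq> 0}"
    hence "finite ({x::real. x \<noteq> 0} \<union> {0})" by simp
    moreover have "{x::real. x \<noteq> 0} \<union> {0} = UNIV" by auto
    ultimately show False using infinite_UNIV_char_0[where 'a=real] by simp
  qed
  ultimately show False using fin finite_subset by blast
qed

lemma Phi_gram:
  fixes B :: "real mat"
  assumes B: "B \<in> carrier_mat n s" and sn: "s \<le> n" and t: "t \<ge> 0"
  and pos: "\<And>a. (\<Sum>i<s. (a i)^2) > 0 \<Longrightarrow> qf (transpose_mat B * B) a + t * (\<Sum>i<s. (a i)^2) > 0"
  shows "\<exists>rs. length rs = s \<and> char_poly (transpose_mat B * B) = (\<Prod>r\<leftarrow>rs. [:-r,1:]) \<and>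
      (\<forall>r\<in>set rs. r \<ge> 0 \<and> r + t > 0) \<and>
      Phi s t (B * transpose_mat B) = ereal (ln (det (transpose_mat B * B + t \<cdot>\<^sub>m 1\<^sub>m s)))"
proof -
  define K where "K = transpose_mat B * B"
  define M where "M = B * transpose_mat B"
  have Bt: "transpose_mat B \<in> carrier_mat s n" using B by simp
  have Kpsd: "K \<in> psd_cone s" unfolding K_def using psd_gram[OF Bt] by simp
  have Kc: "K \<in> carrier_mat s s" and symK: "sym_mat K" using Kpsd unfolding psd_cone_def by auto
  have Mc: "M \<in> carrier_mat n n" unfolding M_def using B by simp
  obtain rs where len: "length rs = s" and cp: "char_poly K = (\<Prod>r\<leftarrow>rs. [:-r,1:])"
    and ev: "\<forall>r\<in>set rs. \<exists>a b. (\<Sum>i<s. (a i)^2) + (\<Sum>i<s. (b i)^2) > 0 \<and>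
        qf K a + qf K b = r * ((\<Sum>i<s. (a i)^2) + (\<Sum>i<s. (b i)^2))"
    using sym_eig[OF Kc symK] by blast
  have rprop: "r \<ge> 0 \<and> r + t > 0" if r: "r \<in> set rs" for r
  proof -
    from ev r obtain a b where sp: "(\<Sum>i<s. (a i)^2) + (\<Sum>i<s. (b i)^2) > 0"
      and e: "qf K a + qf K b = r * ((\<Sum>i<s. (a i)^2) + (\<Sum>i<s. (b i)^2))" by blast
    have qa: "qf K a \<ge> 0" and qb: "qf K b \<ge> 0" using psd_cone_qf[OF Kpsd] by auto
    have sa: "(\<Sum>i<s. (a i)^2) \<ge> 0" and sb: "(\<Sum>i<s. (b i)^2) \<ge> 0" by (auto intro!: sum_nonneg)
    have "r * ((\<Sum>i<s. (a i)^2) + (\<Sum>i<s. (b i)^2)) \<ge> 0" using e qa qb by linarith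
    hence r0: "r \<ge> 0" using sp by (simp add: zero_le_mult_iff)
    have "qf K a + t * (\<Sum>i<s. (a i)^2) + (qf K b + t * (\<Sum>i<s. (b i)^2)) > 0"
    proof (cases "(\<Sum>i<s. (a i)^2) > 0")
      case True
      have "qf K a + t * (\<Sum>i<s. (a i)^2) > 0" using pos[OF True] unfolding K_def .
      moreover have "qf K b + t * (\<Sum>i<s. (b i)^2) \<ge> 0" using qb sb t by simp
      ultimately show ?thesis by linarith
    next
      case False
      hence "(\<Sum>i<s. (b i)^2) > 0" using sp sa by linarith
      hence "qf K b + t * (\<Sum>i<s. (b i)^2) > 0" using pos unfolding K_def by blast
      moreover have "qf K a + t * (\<Sum>i<s. (a i)^2) \<ge> 0" using qa sa t by simp
      ultimately show ?thesis by linarith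
    qed
    hence "(r + t) * ((\<Sum>i<s. (a i)^2) + (\<Sum>i<s. (b i)^2)) > 0" using e by (simp add: algebra_simps)
    hence "r + t > 0" using sp by (simp add: zero_less_mult_iff)
    with r0 show ?thesis by simp
  qed
  have cpM: "char_poly M = [:0,1:]^(n-s) * char_poly K"
  proof (rule poly_eq_nonzero_points)
    fix x :: real assume x: "x \<noteq> 0"
    have "x \<cdot>\<^sub>m 1\<^sub>m n - M = x \<cdot>\<^sub>m 1\<^sub>m n + B * ((-1) \<cdot>\<^sub>m transpose_mat B)"
      unfolding M_def mult_smult_distrib[OF B Bt] using B by (intro eq_matI) auto
    hence "poly (char_poly M) x = det (x \<cdot>\<^sub>m 1\<^sub>m n + B * ((-1) \<cdot>\<^sub>m transpose_mat B))"
      using poly_char[OF Mc] by simp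
    also have "\<dots> = x^(n-s) * det (x \<cdot>\<^sub>m 1\<^sub>m s + ((-1) \<cdot>\<^sub>m transpose_mat B) * B)"
      by (rule sylvester[OF B _ x sn]) (use Bt in simp)
    also have "x \<cdot>\<^sub>m 1\<^sub>m s + ((-1) \<cdot>\<^sub>m transpose_mat B) * B = x \<cdot>\<^sub>m 1\<^sub>m s - K"
      unfolding K_def mult_smult_assoc_mat[OF Bt B] using B by (intro eq_matI) auto
    also have "det \<dots> = poly (char_poly K) x" using poly_char[OF Kc] by simp
    finally show "poly (char_poly M) x = poly ([:0,1:]^(n-s) * char_poly K) x" by simp
  qed
  have cpM': "char_poly M = (\<Prod>r\<leftarrow>replicate (n-s) 0 @ rs. [:-r,1:])"
    unfolding cpM cp by (simp add: prod_list_replicate)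
  define L where "L = rev (sort rs)"
  have srt: "sort (replicate (n-s) 0 @ rs) = replicate (n-s) 0 @ sort rs"
  proof (rule properties_for_sort)
    show "mset (replicate (n - s) 0 @ sort rs) = mset (replicate (n - s) 0 @ rs)" by simp
    show "sorted (replicate (n - s) (0::real) @ sort rs)"
      using rprop by (auto simp: sorted_append)
  qed
  have eM: "eigs_desc M = L @ replicate (n-s) 0"
    unfolding eigs_desc_split[OF cpM'] srt L_def by simp
  have lL: "length L = s" and mL: "mset L = mset rs" and sL: "set L = set rs" unfolding L_def using len by auto
  have eig: "eig M i = L ! (i - 1)" if "i \<in> {1..s}" for i
    unfolding eig_def eM using that lL by (auto simp: nth_append)
  have Lpos: "0 < eig M i + t" if "i \<in> {1..s}" for i
  proof -
    have "i - 1 < length L" using that lL by auto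
    hence "L ! (i - 1) \<in> set rs" using sL nth_mem by blast
    thus ?thesis using eig[OF that] rprop by auto
  qed
  have "Phi s t M = ereal (\<Sum>i=1..s. ln (eig M i + t))" unfolding Phi_def using Lpos by auto
  also have "(\<Sum>i=1..s. ln (eig M i + t)) = (\<Sum>i=1..s. ln (L ! (i-1) + t))"
    by (rule sum.cong) (auto simp: eig)
  also have "\<dots> = (\<Sum>i<s. ln (L ! i + t))" by (rule sum_shift1)
  also have "\<dots> = (\<Sum>r\<leftarrow>rs. ln (r + t))" using sum_nth_perm[OF mL, of "\<lambda>r. ln (r + t)"] lL by simp
  also have "\<dots> = ln (\<Prod>r\<leftarrow>rs. (r + t))" by (rule ln_prod_list[symmetric]) (use rprop in auto)
  also have "\<dots> = ln (det (K + t \<cdot>\<^sub>m 1\<^sub>m s))" using det_shift[OF Kc cp len] by simp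
  finally show ?thesis using len cp rprop unfolding K_def M_def by blast
qed



lemma pick_bij:
  assumes fin: "finite S"
  shows "bij_betw (pick S) {..<card S} S"
  unfolding bij_betw_def
proof
  show "inj_on (pick S) {..<card S}"
  proof (rule inj_onI)
    fix l m assume l: "l \<in> {..<card S}" and m: "m \<in> {..<card S}" and e: "pick S l = pick S m"
    show "l = m"
    proof (rule ccontr)
      assume "l \<noteq> m"
      hence "l < m \<or> m < l" by auto
      thus False using pick_mono[of m S l] pick_mono[of l S m] l m e by auto
    qed
  qed
  show "pick S ` {..<card S} = S"
  proof
    show "pick S ` {..<card S} \<subseteq> S" using pick_in_set by auto
    show "S \<subseteq> pick S ` {..<card S}"
    proof
      fix j assume j: "j \<in> S"
      have "{a\<in>S. a < j} \<subset> S" using j by auto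
      hence "card {a\<in>S. a < j} < card S" using fin by (simp add: psubset_card_mono)
      moreover have "pick S (card {a\<in>S. a < j}) = j" by (rule pick_card_in_set[OF j])
      ultimately show "j \<in> pick S ` {..<card S}" by (intro image_eqI[where x="card {a\<in>S. a < j}"]) auto
    qed
  qed
qed

lemma sum_pick:
  fixes g :: "nat \<Rightarrow> real"
  assumes S: "S \<subseteq> {..<n}" and cS: "card S = s" and z: "\<And>j. j < n \<Longrightarrow> j \<notin> S \<Longrightarrow> g j = 0"
  shows "(\<Sum>j<n. g j) = (\<Sum>l<s. g (pick S l))"
proof -
  have fin: "finite S" using S finite_subset by blast
  have "(\<Sum>j<n. g j) = (\<Sum>j\<in>S. g j)"
    by (rule sum.mono_neutral_right) (use S z in auto)
  also have "\<dots> = (\<Sum>l<s. g (pick S l))"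
    using sum.reindex_bij_betw[OF pick_bij[OF fin], of g] cS by simp
  finally show ?thesis .
qed

lemma tendsto_sum_ln:
  fixes rs :: "real list"
  assumes "\<forall>r\<in>set rs. r + t > 0"
  shows "((\<lambda>\<tau>. \<Sum>r\<leftarrow>rs. ln (r + \<tau>)) \<longlongrightarrow> (\<Sum>r\<leftarrow>rs. ln (r + t))) (at_right t)"
  using assms
proof (induct rs)
  case Nil thus ?case by simp
next
  case (Cons a rs)
  have "((\<lambda>\<tau>. ln (a + \<tau>)) \<longlongrightarrow> ln (a + t)) (at_right t)"
  proof (rule tendsto_ln)
    show "((\<lambda>\<tau>. a + \<tau>) \<longlongrightarrow> a + t) (at_right t)"
      by (rule tendsto_add[OF tendsto_const tendsto_ident_at])
    show "a + t \<noteq> 0" using Cons(2) by auto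
  qed
  hence "((\<lambda>\<tau>. ln (a + \<tau>) + (\<Sum>r\<leftarrow>rs. ln (r + \<tau>))) \<longlongrightarrow> ln (a + t) + (\<Sum>r\<leftarrow>rs. ln (r + t))) (at_right t)"
    using Cons by (intro tendsto_add) auto
  thus ?case by simp
qed

lemma lim_le:
  fixes f :: "real \<Rightarrow> real" and p :: ereal
  assumes lim: "(f \<longlongrightarrow> L) (at_right t)" and le: "\<And>\<tau>. \<tau> > t \<Longrightarrow> p \<le> ereal (f \<tau>)"
  shows "p \<le> ereal L"
proof (rule ccontr)
  assume "\<not> p \<le> ereal L"
  hence lt: "ereal L < p" by simp
  have "p \<le> ereal (f (t + 1))" using le by simp
  then obtain p' where p: "p = ereal p'" using lt by (cases p) auto
  hence "L < p'" using lt by simp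
  hence "eventually (\<lambda>\<tau>. f \<tau> < p') (at_right t)" using order_tendstoD(2)[OF lim] by blast
  moreover have "eventually (\<lambda>\<tau>. \<tau> > t) (at_right t)" by (simp add: eventually_at_right_less)
  ultimately have ev: "eventually (\<lambda>\<tau>. f \<tau> < p' \<and> \<tau> > t) (at_right t)" by (rule eventually_conj)
  have "\<exists>\<tau>. f \<tau> < p' \<and> \<tau> > t"
    using eventually_happens[OF ev] trivial_limit_at_right_real by simp
  then obtain \<tau> where "f \<tau> < p'" "\<tau> > t" by blast
  with le[of \<tau>] p show False by simp
qed

lemma key:
  fixes C A :: "real mat"
  assumes posd: "pos_def n C" and chol: "cholesky_factor n C t A" and t: "0 \<le> t"
  and S: "S \<subseteq> {..<n}" and cS: "card S = s" and sn: "s \<le> n"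
  shows "Phi_hat n s t (mat n s (\<lambda>(i,l). A $$ (i, pick S l)) * transpose_mat (mat n s (\<lambda>(i,l). A $$ (i, pick S l))))
     = ereal (ln (det (submatrix C S S)))"
proof -
  define B where "B = mat n s (\<lambda>(i,l). A $$ (i, pick S l))"
  have B: "B \<in> carrier_mat n s" unfolding B_def by simp
  have Ac: "A \<in> carrier_mat n n" and AtA: "transpose_mat A * A = C - t \<cdot>\<^sub>m 1\<^sub>m n"
    using chol unfolding cholesky_factor_def by auto
  have Cc: "C \<in> carrier_mat n n" using posd unfolding pos_def_def by auto
  have fin: "finite S" using S finite_subset by blast
  have pS: "pick S l \<in> S" if "l < s" for l using pick_in_set[of l S] cS that by auto
  have pn: "pick S l < n" if "l < s" for l using pS[OF that] S by auto
  have pcard: "card {x\<in>S. x < pick S l} = l" if "l < s" for l using card_pick[of l S] cS that by auto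
  have pinj: "pick S l = pick S m \<longleftrightarrow> l = m" if "l < s" "m < s" for l m
    using pick_bij[OF fin] cS that unfolding bij_betw_def inj_on_def by auto
  have cardS: "card {i. i < dim_row C \<and> i \<in> S} = s"
  proof -
    have "{i. i < dim_row C \<and> i \<in> S} = S" using S Cc by auto
    thus ?thesis using cS by simp
  qed
  have Csub: "submatrix C S S \<in> carrier_mat s s" using cardS Cc unfolding carrier_mat_def
    by (simp add: dim_submatrix)
  have subidx: "submatrix C S S $$ (l,m) = C $$ (pick S l, pick S m)" if "l < s" "m < s" for l m
    using submatrix_index[of l C S m S] cardS Cc that by auto
  define K where "K = transpose_mat B * B"
  have Kc: "K \<in> carrier_mat s s" unfolding K_def using B by simp
  have AtAe: "(\<Sum>i<n. A $$ (i,j) * A $$ (i,k)) = C $$ (j,k) - t * (if j = k then 1 else 0)"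
    if "j < n" "k < n" for j k
  proof -
    have "(transpose_mat A * A) $$ (j,k) = (\<Sum>i<n. A $$ (i,j) * A $$ (i,k))"
      using Ac that by (auto simp: scalar_prod_def atLeast0LessThan)
    moreover have "(transpose_mat A * A) $$ (j,k) = C $$ (j,k) - t * (if j = k then 1 else 0)"
      unfolding AtA using Cc that by auto
    ultimately show ?thesis by simp
  qed
  have KC: "K + t \<cdot>\<^sub>m 1\<^sub>m s = submatrix C S S"
  proof (rule eq_matI)
    show "dim_row (K + t \<cdot>\<^sub>m 1\<^sub>m s) = dim_row (submatrix C S S)" using Kc Csub by simp
    show "dim_col (K + t \<cdot>\<^sub>m 1\<^sub>m s) = dim_col (submatrix C S S)" using Kc Csub by simp
    fix l m assume "l < dim_row (submatrix C S S)" "m < dim_col (submatrix C S S)"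
    hence l: "l < s" and m: "m < s" using Csub by auto
    have "K $$ (l,m) = (\<Sum>i<n. A $$ (i, pick S l) * A $$ (i, pick S m))"
      unfolding K_def B_def using l m by (auto simp: scalar_prod_def atLeast0LessThan)
    also have "\<dots> = C $$ (pick S l, pick S m) - t * (if l = m then 1 else 0)"
      using AtAe[OF pn[OF l] pn[OF m]] pinj[OF l m] by simp
    finally show "(K + t \<cdot>\<^sub>m 1\<^sub>m s) $$ (l, m) = submatrix C S S $$ (l, m)"
      using Kc l m subidx[OF l m] by auto
  qed
  have pos: "qf K a + t * (\<Sum>i<s. (a i)^2) > 0" if apos: "(\<Sum>i<s. (a i)^2) > 0" for a
  proof -
    have "qf K a + t * (\<Sum>i<s. (a i)^2) = qf (submatrix C S S) a"
      unfolding KC[symmetric] qf_shift[OF Kc] ..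
    also have "qf (submatrix C S S) a = (\<Sum>l<s. \<Sum>m<s. C $$ (pick S l, pick S m) * a l * a m)"
      unfolding qf_def using Csub subidx by auto
    also have "\<dots> > 0"
    proof -
      define f where "f j = (if j \<in> S then a (card {x\<in>S. x < j}) else 0)" for j
      have fp: "f (pick S l) = a l" if "l < s" for l unfolding f_def using pS[OF that] pcard[OF that] by simp
      have "qf C f = (\<Sum>j<n. \<Sum>k<n. C $$ (j,k) * f j * f k)" unfolding qf_def using Cc by simp
      also have "\<dots> = (\<Sum>l<s. \<Sum>k<n. C $$ (pick S l,k) * f (pick S l) * f k)"
        by (rule sum_pick[OF S cS]) (simp add: f_def)
      also have "\<dots> = (\<Sum>l<s. \<Sum>m<s. C $$ (pick S l, pick S m) * f (pick S l) * f (pick S m))"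
        by (rule sum.cong[OF refl], rule sum_pick[OF S cS]) (simp add: f_def)
      also have "\<dots> = (\<Sum>l<s. \<Sum>m<s. C $$ (pick S l, pick S m) * a l * a m)"
        by (auto simp: fp intro!: sum.cong)
      finally have qC: "qf C f = (\<Sum>l<s. \<Sum>m<s. C $$ (pick S l, pick S m) * a l * a m)" .
      obtain l where l: "l < s" "a l \<noteq> 0"
      proof (rule ccontr)
        assume "\<not> thesis"
        hence "\<forall>l<s. a l = 0" using that by blast
        hence "(\<Sum>i<s. (a i)^2) = 0" by simp
        with apos show False by simp
      qed
      have "vec n f \<noteq> 0\<^sub>v n"
      proof
        assume "vec n f = 0\<^sub>v n"
        hence "vec n f $ pick S l = 0\<^sub>v n $ pick S l" by simp
        thus False using pn[OF l(1)] fp[OF l(1)] l(2) by simp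
      qed
      hence "0 < vec n f \<bullet> (C *\<^sub>v vec n f)" using posd unfolding pos_def_def by auto
      thus ?thesis using qf_vec[OF Cc] qC by simp
    qed
    finally show ?thesis .
  qed
  obtain rs where len: "length rs = s" and cp: "char_poly K = (\<Prod>r\<leftarrow>rs. [:-r,1:])"
    and rprop: "\<forall>r\<in>set rs. r \<ge> 0 \<and> r + t > 0"
    and PhiM: "Phi s t (B * transpose_mat B) = ereal (ln (det (K + t \<cdot>\<^sub>m 1\<^sub>m s)))"
    using Phi_gram[OF B sn t pos[unfolded K_def]] unfolding K_def by blast
  define M where "M = B * transpose_mat B"
  have Mpsd: "M \<in> psd_cone n" unfolding M_def by (rule psd_gram[OF B])
  have lnK: "ln (det (K + \<tau> \<cdot>\<^sub>m 1\<^sub>m s)) = (\<Sum>r\<leftarrow>rs. ln (r + \<tau>))" if "\<forall>r\<in>set rs. r + \<tau> > 0" for \<tau>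
    using det_shift[OF Kc cp len, of \<tau>] ln_prod_list[of rs "\<lambda>r. r + \<tau>"] that by simp
  have LB: "Phi s t M \<le> Phi_hat n s t M" unfolding Phi_hat_def
  proof (rule Inf_greatest)
    fix y assume "y \<in> {g M |g. concave_on_psd n g \<and> (\<forall>Y\<in>psd_cone n. Phi s t Y \<le> g Y)}"
    then obtain g where "y = g M" "\<forall>Y\<in>psd_cone n. Phi s t Y \<le> g Y" by blast
    thus "Phi s t M \<le> y" using Mpsd by simp
  qed
  have UB: "Phi_hat n s t M \<le> ereal (\<Sum>r\<leftarrow>rs. ln (r + \<tau>))" if tau: "\<tau> > t" for \<tau>
  proof -
    have tau0: "\<tau> > 0" using tau t by simp
    have "Phi_hat n s t M \<le> ereal (ln (det (\<tau> \<cdot>\<^sub>m 1\<^sub>m s + K)))"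
      unfolding M_def K_def by (rule Phi_hat_ub[OF B sn _ tau0]) (use tau in simp)
    also have "\<tau> \<cdot>\<^sub>m 1\<^sub>m s + K = K + \<tau> \<cdot>\<^sub>m 1\<^sub>m s" using Kc by (simp add: comm_add_mat[of _ s s])
    also have "ln (det (K + \<tau> \<cdot>\<^sub>m 1\<^sub>m s)) = (\<Sum>r\<leftarrow>rs. ln (r + \<tau>))"
      by (rule lnK) (use rprop tau0 in force)
    finally show ?thesis .
  qed
  have lim: "((\<lambda>\<tau>. \<Sum>r\<leftarrow>rs. ln (r + \<tau>)) \<longlongrightarrow> (\<Sum>r\<leftarrow>rs. ln (r + t))) (at_right t)"
    by (rule tendsto_sum_ln) (use rprop in auto)
  have "Phi_hat n s t M \<le> ereal (\<Sum>r\<leftarrow>rs. ln (r + t))" by (rule lim_le[OF lim UB])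
  also have "(\<Sum>r\<leftarrow>rs. ln (r + t)) = ln (det (K + t \<cdot>\<^sub>m 1\<^sub>m s))"
    by (rule lnK[symmetric]) (use rprop in auto)
  finally have "Phi_hat n s t M \<le> ereal (ln (det (K + t \<cdot>\<^sub>m 1\<^sub>m s)))" .
  moreover have "ereal (ln (det (K + t \<cdot>\<^sub>m 1\<^sub>m s))) \<le> Phi_hat n s t M" using LB PhiM M_def by simp
  ultimately have "Phi_hat n s t M = ereal (ln (det (K + t \<cdot>\<^sub>m 1\<^sub>m s)))" by (rule antisym)
  thus ?thesis unfolding KC M_def B_def .
qed

lemma M_support:
  fixes A :: "real mat" and x :: "real vec"
  assumes bin: "\<forall>i<n. x $ i \<in> {0, 1}" and Ac: "A \<in> carrier_mat n n"
  and S: "S = {i. i < n \<and> x $ i = 1}" and cS: "card S = s"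
  shows "M_mat n A x = mat n s (\<lambda>(i,l). A $$ (i, pick S l)) * transpose_mat (mat n s (\<lambda>(i,l). A $$ (i, pick S l)))"
proof (rule eq_matI)
  have Sn: "S \<subseteq> {..<n}" using S by auto
  have fin: "finite S" using Sn finite_subset by blast
  have pS: "pick S l \<in> S" if "l < s" for l using pick_in_set[of l S] cS that by auto
  fix j k assume "j < dim_row (mat n s (\<lambda>(i,l). A $$ (i, pick S l)) * transpose_mat (mat n s (\<lambda>(i,l). A $$ (i, pick S l))))"
    "k < dim_col (mat n s (\<lambda>(i,l). A $$ (i, pick S l)) * transpose_mat (mat n s (\<lambda>(i,l). A $$ (i, pick S l))))"
  hence j: "j < n" and k: "k < n" by auto
  have "M_mat n A x $$ (j,k) = (\<Sum>i<n. x $ i * (A $$ (j, i) * A $$ (k, i)))"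
    unfolding M_mat_def using j k by simp
  also have "\<dots> = (\<Sum>l<s. x $ pick S l * (A $$ (j, pick S l) * A $$ (k, pick S l)))"
  proof (rule sum_pick[OF Sn cS])
    fix i assume "i < n" "i \<notin> S"
    hence "x $ i = 0" using bin S by auto
    thus "x $ i * (A $$ (j, i) * A $$ (k, i)) = 0" by simp
  qed
  also have "\<dots> = (\<Sum>l<s. A $$ (j, pick S l) * A $$ (k, pick S l))"
    by (rule sum.cong[OF refl]) (use pS S in auto)
  also have "\<dots> = (mat n s (\<lambda>(i,l). A $$ (i, pick S l)) * transpose_mat (mat n s (\<lambda>(i,l). A $$ (i, pick S l)))) $$ (j,k)"
    using j k by (auto simp: scalar_prod_def atLeast0LessThan)
  finally show "M_mat n A x $$ (j,k) = (mat n s (\<lambda>(i,l). A $$ (i, pick S l)) * transpose_mat (mat n s (\<lambda>(i,l). A $$ (i, pick S l)))) $$ (j,k)" .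
qed (auto simp: M_mat_def)

lemma sum_bin_card:
  fixes x :: "real vec"
  assumes bin: "\<forall>i<n. x $ i \<in> {0, 1}"
  shows "(\<Sum>i<n. x $ i) = real (card {i. i < n \<and> x $ i = 1})"
proof -
  let ?S = "{i. i < n \<and> x $ i = 1}"
  have "(\<Sum>i<n. x $ i) = (\<Sum>i\<in>?S. x $ i)"
    by (rule sum.mono_neutral_right) (use bin in auto)
  also have "\<dots> = (\<Sum>i\<in>?S. 1)" by simp
  finally show ?thesis by simp
qed

theorem corollary1:
  fixes n s :: nat and C A :: "real mat" and t :: real
  assumes "1 \<le> n" and "1 \<le> s" and "s \<le> n"
    and "pos_def n C"
    and "0 \<le> t" and "t \<le> lambda_min C"
    and "cholesky_factor n C t A"
  shows "ereal (Max {ln (det (submatrix C S S)) | S. S \<subseteq> {..<n} \<and> card S = s})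
       = Max {Phi_hat n s t (M_mat n A x) | x. x \<in> carrier_vec n \<and> (\<forall>i<n. x $ i \<in> {0, 1})
                \<and> (\<Sum>i<n. x $ i) = real s}"
proof -
  note sn = assms(3) and posd = assms(4) and t = assms(5) and chol = assms(7)
  have Ac: "A \<in> carrier_mat n n" using chol unfolding cholesky_factor_def by auto
  define T where "T = {S. S \<subseteq> {..<n} \<and> card S = s}"
  define h where "h S = ln (det (submatrix C S S))" for S
  have L: "{ln (det (submatrix C S S)) | S. S \<subseteq> {..<n} \<and> card S = s} = h ` T"
    unfolding T_def h_def by auto
  have R: "{Phi_hat n s t (M_mat n A x) | x. x \<in> carrier_vec n \<and> (\<forall>i<n. x $ i \<in> {0, 1})
                \<and> (\<Sum>i<n. x $ i) = real s} = ereal ` h ` T"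
  proof (intro equalityI subsetI)
    fix y assume "y \<in> {Phi_hat n s t (M_mat n A x) | x. x \<in> carrier_vec n \<and> (\<forall>i<n. x $ i \<in> {0, 1})
                \<and> (\<Sum>i<n. x $ i) = real s}"
    then obtain x where y: "y = Phi_hat n s t (M_mat n A x)" and bin: "\<forall>i<n. x $ i \<in> {0, 1}"
      and sx: "(\<Sum>i<n. x $ i) = real s" by blast
    define S where "S = {i. i < n \<and> x $ i = 1}"
    have cS: "card S = s" using sum_bin_card[OF bin] sx unfolding S_def by simp
    have Sn: "S \<subseteq> {..<n}" unfolding S_def by auto
    have "y = ereal (h S)" unfolding y h_def M_support[OF bin Ac S_def cS]
      by (rule key[OF posd chol t Sn cS sn])
    moreover have "S \<in> T" unfolding T_def using Sn cS by simp
    ultimately show "y \<in> ereal ` h ` T" by blast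
  next
    fix y assume "y \<in> ereal ` h ` T"
    then obtain S where y: "y = ereal (h S)" and ST: "S \<in> T" by blast
    have Sn: "S \<subseteq> {..<n}" and cS: "card S = s" using ST unfolding T_def by auto
    define x where "x = vec n (\<lambda>i. if i \<in> S then 1 else (0::real))"
    have xc: "x \<in> carrier_vec n" unfolding x_def by simp
    have bin: "\<forall>i<n. x $ i \<in> {0, 1}" unfolding x_def by auto
    have Seq: "S = {i. i < n \<and> x $ i = 1}" unfolding x_def using Sn by (auto split: if_splits)
    have sx: "(\<Sum>i<n. x $ i) = real s" using sum_bin_card[OF bin] Seq cS by simp
    have "Phi_hat n s t (M_mat n A x) = ereal (h S)" unfolding h_def M_support[OF bin Ac Seq cS]
      by (rule key[OF posd chol t Sn cS sn])
    thus "y \<in> {Phi_hat n s t (M_mat n A x) | x. x \<in> carrier_vec n \<and> (\<forall>i<n. x $ i \<in> {0, 1})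
                \<and> (\<Sum>i<n. x $ i) = real s}" using xc bin sx y by (intro CollectI exI[of _ x]) auto
  qed
  have finT: "finite T" unfolding T_def
    by (rule finite_subset[of _ "Pow {..<n}"]) auto
  have neT: "T \<noteq> {}" unfolding T_def using sn by (intro ex_in_conv[THEN iffD1] exI[of _ "{..<s}"]) auto
  have mono: "mono ereal" by (auto simp: mono_def)
  show ?thesis unfolding L R
    by (rule mono_Max_commute[OF mono]) (use finT neT in auto)
qed

end
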